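(* Let $X=[0,\infty)$, $K(x,y)=x\wedge y$ on $X\times X$, and let $0<x_1<x_2<\cdots$ be real numbers and $(y_j)_{j\in\mathbb{N}}$ real numbers. If $\sum_{j\in\mathbb{N}}(y_{j+1}-y_j)^2/(x_{j+1}-x_j)<\infty$, then there exists $f\in\mathscr{H}(K)$ with $f(x_j)=y_j$ for all $j\in\mathbb{N}$.
   Context: $\mathscr{H}(K)$ is the reproducing kernel Hilbert space of $K(x,y)=\min(x,y)$ on $[0,\infty)$; it consists of the functions $f$ on $[0,\infty)$ with $f(0)=0$ and distributional derivative $f'\in L^2([0,\infty))$, with $\|f\|^2_{\mathscr{H}(K)}=\int_0^\infty|f'(x)|^2dx$. *)

theory Defs
  imports "HOL-Analysis.Analysis"
begin

text \<open>The RKHS H(K) of K(x,y) = min x y on [0,\<infinity>): functions f with f(0) = 0 whose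
  (distributional) derivative g lies in L^2([0,\<infinity>)), i.e. f(x) = integral of g over [0,x]
  for all x \<ge> 0 (absolutely continuous representative). Values for x < 0 are irrelevant.\<close>
definition H_K :: "(real \<Rightarrow> real) set" where
  "H_K = {f. f 0 = 0 \<and>
     (\<exists>g. g \<in> borel_measurable (lebesgue_on {0..}) \<and>
          integrable (lebesgue_on {0..}) (\<lambda>t. (g t)\<^sup>2) \<and>
          (\<forall>x\<ge>0. f x = (LINT t:{0..x}|lebesgue. g t)))}"

end

theory Submission
  imports Defs
begin

theorem corollary10p7:
  fixes x y :: "nat \<Rightarrow> real"
  assumes "0 < x 0"
    and "strict_mono x"
    and "summable (\<lambda>j. (y (Suc j) - y j)\<^sup>2 / (x (Suc j) - x j))"
  shows "\<exists>f \<in> H_K. \<forall>j. f (x j) = y j"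
proof -
  define a where "a = (\<lambda>j. case j of 0 \<Rightarrow> 0 | Suc k \<Rightarrow> x k)"
  define b where "b = (\<lambda>j. case j of 0 \<Rightarrow> 0 | Suc k \<Rightarrow> y k)"
  have a0: "a 0 = 0" and aS: "\<And>k. a (Suc k) = x k" by (simp_all add: a_def)
  have b0: "b 0 = 0" and bS: "\<And>k. b (Suc k) = y k" by (simp_all add: b_def)
  have amono: "strict_mono a"
  proof (rule strict_monoI_Suc)
    fix j show "a j < a (Suc j)"
      using assms(1,2) by (cases j) (auto simp: a_def strict_mono_def)
  qed
  have ale: "\<And>i j. i \<le> j \<Longrightarrow> a i \<le> a j" using amono by (simp add: strict_mono_less_eq)
  have apos: "\<And>j. 0 \<le> a j" using ale[of 0] a0 by auto
  have alt: "\<And>j. a j < a (Suc j)" using amono by (simp add: strict_mono_def)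
  define c where "c j = (b (Suc j) - b j) / (a (Suc j) - a j)" for j
  define I where "I j = {a j..<a (Suc j)}" for j
  have disj: "j = k" if "t \<in> I j" "t \<in> I k" for t j k
  proof (rule ccontr)
    assume "j \<noteq> k"
    then consider "Suc j \<le> k" | "Suc k \<le> j" by linarith
    then show False
      using that ale[of "Suc j" k] ale[of "Suc k" j] unfolding I_def by cases auto
  qed
  define g where "g t = (\<Sum>j. c j * indicator (I j) t)" for t
  have gI: "g t = c j" if "t \<in> I j" for t j
  proof -
    have "(\<Sum>i. c i * indicator (I i) t) = (\<Sum>i\<in>{j}. c i * indicator (I i) t)"
    proof (rule suminf_finite)
      fix i assume "i \<notin> {j}"
      then have "t \<notin> I i" using disj that by blast
      then show "c i * indicator (I i) t = 0" by simp
    qed simp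
    then show ?thesis using that by (simp add: g_def)
  qed
  have gN: "g t = 0" if "\<forall>j. t \<notin> I j" for t
    using that by (simp add: g_def)
  have gsums: "(\<lambda>j. c j * indicator (I j) t) sums g t" for t
  proof (cases "\<exists>j. t \<in> I j")
    case True
    then obtain j where j: "t \<in> I j" by blast
    have "(\<lambda>i. c i * indicator (I i) t) sums (\<Sum>i\<in>{j}. c i * indicator (I i) t)"
    proof (rule sums_finite)
      fix i assume "i \<notin> {j}"
      then have "t \<notin> I i" using disj j by blast
      then show "c i * indicator (I i) t = 0" by simp
    qed simp
    then show ?thesis using gI[OF j] j by simp
  next
    case False
    then show ?thesis using gN[of t] by simp
  qed
  have Imeas: "I j \<in> sets borel" for j unfolding I_def by simp
  have gmeas: "g \<in> borel_measurable borel"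
  proof (rule borel_measurable_LIMSEQ_real)
    fix t show "(\<lambda>n. \<Sum>j<n. c j * indicator (I j) t) \<longlonglongrightarrow> g t"
      using gsums[of t] by (simp add: sums_def)
  next
    fix n show "(\<lambda>t. \<Sum>j<n. c j * indicator (I j) t) \<in> borel_measurable borel"
      using Imeas by (intro borel_measurable_sum borel_measurable_times borel_measurable_const
          borel_measurable_indicator) auto
  qed
  have gmeasL: "g \<in> borel_measurable lborel" using gmeas by simp
  have gmeasLe: "g \<in> borel_measurable lebesgue" using gmeasL by (rule measurable_completion)
  have gint: "(LINT t:{0..a n}|lebesgue. g t) = b n" for n
  proof -
    have m1: "(\<lambda>t. indicator {0..a n} t *\<^sub>R g t) \<in> borel_measurable lborel"
      using gmeasL by (intro borel_measurable_scaleR) auto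
    have "(LINT t:{0..a n}|lebesgue. g t) = integral\<^sup>L lborel (\<lambda>t. indicator {0..a n} t *\<^sub>R g t)"
      unfolding set_lebesgue_integral_def by (rule integral_completion[OF m1])
    also have "\<dots> = integral\<^sup>L lborel (\<lambda>t. \<Sum>j<n. c j * indicator (I j) t)"
    proof (rule integral_cong_AE)
      show "(\<lambda>t. indicator {0..a n} t *\<^sub>R g t) \<in> borel_measurable lborel" by (rule m1)
      show "(\<lambda>t. \<Sum>j<n. c j * indicator (I j) t) \<in> borel_measurable lborel"
        using Imeas by (intro borel_measurable_sum borel_measurable_times borel_measurable_const
          borel_measurable_indicator) auto
      show "AE t in lborel. indicator {0..a n} t *\<^sub>R g t = (\<Sum>j<n. c j * indicator (I j) t)"
        using AE_lborel_singleton[of "a n"]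
      proof eventually_elim
        case (elim t)
        show ?case
        proof (cases "0 \<le> t \<and> t < a n")
          case True
          have "g t = (\<Sum>j. c j * indicator (I j) t)" by (simp add: g_def)
          also have "\<dots> = (\<Sum>j<n. c j * indicator (I j) t)"
          proof (rule suminf_finite)
            fix j assume "j \<notin> {..<n}"
            then have "a n \<le> a j" using ale by simp
            then show "c j * indicator (I j) t = 0" using True by (simp add: I_def)
          qed simp
          finally show ?thesis using True by simp
        next
          case False
          have "t \<notin> I j" if "j < n" for j
          proof
            assume "t \<in> I j"
            then have "0 \<le> t" "t < a (Suc j)" using apos[of j] by (auto simp: I_def)
            moreover have "a (Suc j) \<le> a n" using ale that by simp
            ultimately have "t < a n" by simp
            with False \<open>0 \<le> t\<close> show False by simp
          qed
          then have "(\<Sum>j<n. c j * indicator (I j) t) = 0" by simp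
          moreover have "indicator {0..a n} t = (0::real)" using False elim by auto
          ultimately show ?thesis by simp
        qed
      qed
    qed
    also have "\<dots> = (\<Sum>j<n. c j * (a (Suc j) - a j))"
    proof -
      have "integral\<^sup>L lborel (\<lambda>t. \<Sum>j<n. c j * indicator (I j) t)
          = (\<Sum>j<n. integral\<^sup>L lborel (\<lambda>t. c j * indicator (I j) t))"
      proof (rule Bochner_Integration.integral_sum)
        fix j show "integrable lborel (\<lambda>t. c j * indicator (I j) t)"
          using alt[of j] by (intro integrable_mult_right integrable_real_indicator)
            (auto simp: I_def less_imp_le)
      qed
      also have "\<dots> = (\<Sum>j<n. c j * (a (Suc j) - a j))"
        using alt by (auto simp: I_def less_imp_le intro!: sum.cong)
      finally show ?thesis .
    qed
    also have "\<dots> = (\<Sum>j<n. b (Suc j) - b j)"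
    proof (rule sum.cong)
      fix j have "a (Suc j) - a j \<noteq> 0" using alt[of j] by simp
      then show "c j * (a (Suc j) - a j) = b (Suc j) - b j" by (simp add: c_def)
    qed simp
    also have "\<dots> = b n" by (simp add: sum_lessThan_telescope b0)
    finally show ?thesis .
  qed
  define f where "f s = (LINT t:{0..s}|lebesgue. g t)" for s
  have "f \<in> H_K"
    unfolding H_K_def
  proof (intro CollectI conjI exI[of _ g] allI impI)
    show "f 0 = 0" using gint[of 0] by (simp add: f_def a0 b0)
    show "g \<in> borel_measurable (lebesgue_on {0..})"
      using gmeasLe by (rule measurable_restrict_space1)
    show "integrable (lebesgue_on {0..}) (\<lambda>t. (g t)\<^sup>2)"
    proof -
      define s where "s j = c j ^ 2 * (a (Suc j) - a j)" for j
      have s_nonneg: "0 \<le> s j" for j using alt[of j] by (simp add: s_def)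
      have "summable (\<lambda>j. s (Suc j))"
      proof (rule summable_cong[THEN iffD2, OF _ assms(3)])
        show "\<forall>\<^sub>F j in sequentially. s (Suc j) = (y (Suc j) - y j)\<^sup>2 / (x (Suc j) - x j)"
        proof (intro always_eventually allI)
          fix j
          have ne: "a (Suc (Suc j)) - a (Suc j) \<noteq> 0" using alt[of "Suc j"] by simp
          have "s (Suc j) = (b (Suc (Suc j)) - b (Suc j))\<^sup>2 / (a (Suc (Suc j)) - a (Suc j))"
          proof -
            have gen: "(u / d) ^ 2 * d = u\<^sup>2 / d" if "d \<noteq> 0" for u d :: real
              using that by (simp add: power2_eq_square)
            show ?thesis unfolding s_def c_def by (rule gen[OF ne])
          qed
          then show "s (Suc j) = (y (Suc j) - y j)\<^sup>2 / (x (Suc j) - x j)"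
            by (simp add: aS bS)
        qed
      qed
      then have sums: "summable s" by (simp add: summable_Suc_iff)
      have pw: "ennreal ((g t)\<^sup>2) = (\<Sum>j. ennreal (c j ^ 2) * indicator (I j) t)" for t
      proof (cases "\<exists>j. t \<in> I j")
        case True
        then obtain j where j: "t \<in> I j" by blast
        have "(\<Sum>i. ennreal (c i ^ 2) * indicator (I i) t) = (\<Sum>i\<in>{j}. ennreal (c i ^ 2) * indicator (I i) t)"
        proof (rule suminf_finite)
          fix i assume "i \<notin> {j}"
          then have "t \<notin> I i" using disj j by blast
          then show "ennreal (c i ^ 2) * indicator (I i) t = 0" by simp
        qed simp
        then show ?thesis using gI[OF j] j by simp
      next
        case False
        then show ?thesis using gN[of t] by simp
      qed
      have "(\<integral>\<^sup>+t. ennreal ((g t)\<^sup>2) \<partial>lborel) = (\<integral>\<^sup>+t. (\<Sum>j. ennreal (c j ^ 2) * indicator (I j) t) \<partial>lborel)"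
        by (simp add: pw)
      also have "\<dots> = (\<Sum>j. \<integral>\<^sup>+t. ennreal (c j ^ 2) * indicator (I j) t \<partial>lborel)"
        by (rule nn_integral_suminf) (use Imeas in auto)
      also have "\<dots> = (\<Sum>j. ennreal (s j))"
      proof (rule suminf_cong)
        fix j
        have "(\<integral>\<^sup>+t. ennreal (c j ^ 2) * indicator (I j) t \<partial>lborel) = ennreal (c j ^ 2) * emeasure lborel (I j)"
          by (rule nn_integral_cmult_indicator) (use Imeas in simp)
        also have "\<dots> = ennreal (c j ^ 2) * ennreal (a (Suc j) - a j)"
          using alt[of j] by (simp add: I_def)
        also have "\<dots> = ennreal (s j)"
          using alt[of j] by (simp add: s_def ennreal_mult'')
        finally show "(\<integral>\<^sup>+t. ennreal (c j ^ 2) * indicator (I j) t \<partial>lborel) = ennreal (s j)" .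
      qed
      also have "\<dots> < \<infinity>"
        using ennreal_suminf_neq_top[OF sums s_nonneg] by (simp add: top.not_eq_extremum)
      finally have fin: "(\<integral>\<^sup>+t. ennreal ((g t)\<^sup>2) \<partial>lborel) < \<infinity>" .
      have m2: "(\<lambda>t. (g t)\<^sup>2) \<in> borel_measurable lborel" using gmeasL by measurable
      have "integrable lborel (\<lambda>t. (g t)\<^sup>2)"
        by (rule integrableI_nonneg[OF m2 _ fin]) simp
      then have "integrable lebesgue (\<lambda>t. (g t)\<^sup>2)"
        using integrable_completion[OF m2] by simp
      then have "integrable lebesgue (\<lambda>t. indicator {0..} t *\<^sub>R (g t)\<^sup>2)"
        by (rule integrable_mult_indicator[rotated]) simp
      then show ?thesis
        by (subst integrable_restrict_space) simp_all
    qed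
  qed (simp add: f_def)
  moreover have "f (x j) = y j" for j
    using gint[of "Suc j"] by (simp add: f_def aS bS)
  ultimately show ?thesis by blast
qed

end
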